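(* Let $n\ge0$ and run the Tiden–Arnborg algorithm on $\sigma(n)$, performing sum transformations level by level. At each level $k<n+3$, the sum transformation is applied $2^k-1$ times.
   Context: Variables are $T$, $x_s$, $y_s$ with $s$ a string over $\{1,2\}$ ($x=x_\varepsilon$, $y=y_\varepsilon$); the level of $x_s$ or $y_s$ is $|s|+1$, and a sum transformation is said to be at level $k$ if it is applied at a peak of level $k$. For $n\ge0$, $\sigma(n)$ consists of, for all $0\le i\le n$: $x_{1^i}=^?x_{1^{i+1}}+x_{1^i2}$, $y_{2^i}=^?y_{2^i1}+y_{2^{i+1}}$, $y_{2^i1}=^?T\times x_{1^i2}$, $x=^?T\times y$, $x_{1^{i+1}}=^?x_{1^{i+2}}+x_{1^{i+1}2}$; its variables occupy levels $1,\dots,n+3$. A variable $U_i$ ($U\in\{x,y\}$) is a peak if the system contains both $U_i=^?U_{i1}+U_{i2}$ and $U_i=^?T\times W_j$. A sum transformation at a peak $U_i$ replaces $U_i=^?U_{i1}+U_{i2}$ by $W_j=^?W_{j1}+W_{j2}$, $U_{i1}=^?T\times W_{j1}$, $U_{i2}=^?T\times W_{j2}$ (keeping $U_i=^?T\times W_j$), with $W_{j1},W_{j2}$ identified with the existing children of $W_j$ if $W_j$ already has a sum equation. The Tiden–Arnborg algorithm (for $x\times(y+z)=x\times y+x\times z$) applies sum transformations as long as possible, completing all those at one level before the next. *)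

theory Defs
  imports Main
begin

(* Letters of the index strings s over {1,2} *)
datatype dir = One | Two

datatype var = T | X "dir list" | Y "dir list"

(* Equations: SumEq U A B  is  U =? A + B ;  ProdEq U A B  is  U =? A * B *)
datatype eqn = SumEq var var var | ProdEq var var var

type_synonym sys = "eqn set"

fun level :: "var \<Rightarrow> nat" where
  "level T = 0"
| "level (X s) = length s + 1"
| "level (Y s) = length s + 1"

fun child :: "var \<Rightarrow> dir \<Rightarrow> var" where
  "child T d = T"
| "child (X s) d = X (s @ [d])"
| "child (Y s) d = Y (s @ [d])"

definition sigma :: "nat \<Rightarrow> sys" where
  "sigma n = (\<Union>i\<in>{0..n}.
     { SumEq (X (replicate i One)) (X (replicate (Suc i) One)) (X (replicate i One @ [Two])),
       SumEq (Y (replicate i Two)) (Y (replicate i Two @ [One])) (Y (replicate (Suc i) Two)),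
       ProdEq (Y (replicate i Two @ [One])) T (X (replicate i One @ [Two])),
       ProdEq (X []) T (Y []),
       SumEq (X (replicate (Suc i) One)) (X (replicate (Suc (Suc i)) One))
             (X (replicate (Suc i) One @ [Two])) })"

definition peak :: "sys \<Rightarrow> var \<Rightarrow> bool" where
  "peak S U \<longleftrightarrow> U \<noteq> T \<and> (\<exists>A B. SumEq U A B \<in> S) \<and> (\<exists>W. ProdEq U T W \<in> S)"

definition sum_transform :: "sys \<Rightarrow> var \<Rightarrow> sys \<Rightarrow> bool" where
  "sum_transform S U S' \<longleftrightarrow> U \<noteq> T \<and>
     (\<exists>U1 U2 W W1 W2. SumEq U U1 U2 \<in> S \<and> ProdEq U T W \<in> S \<and>
        (SumEq W W1 W2 \<in> S \<or>
         ((\<forall>A B. SumEq W A B \<notin> S) \<and> W1 = child W One \<and> W2 = child W Two)) \<and>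
        S' = (S - {SumEq U U1 U2}) \<union> {SumEq W W1 W2, ProdEq U1 T W1, ProdEq U2 T W2})"

inductive steps_at :: "nat \<Rightarrow> sys \<Rightarrow> nat \<Rightarrow> sys \<Rightarrow> bool" for k where
  refl: "steps_at k S 0 S"
| step: "steps_at k S m S' \<Longrightarrow> sum_transform S' U S'' \<Longrightarrow> level U = k \<Longrightarrow>
         steps_at k S (Suc m) S''"

definition complete_phase :: "nat \<Rightarrow> sys \<Rightarrow> nat \<Rightarrow> sys \<Rightarrow> bool" where
  "complete_phase k S m S' \<longleftrightarrow> steps_at k S m S' \<and> \<not> (\<exists>U. peak S' U \<and> level U = k)"

end

theory Submission
  imports Defs
begin

fun Q :: "nat \<Rightarrow> nat \<Rightarrow> var" where
  "Q 0 i = (if i = 0 then X [] else Y [])"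
| "Q (Suc m) i = (if i < 2^Suc m then child (Q m i) One else child (Q m (i - 2^Suc m)) Two)"

lemma Q_shape: "\<exists>s. length s = m \<and> (Q m i = X s \<or> Q m i = Y s)"
proof (induction m arbitrary: i)
  case 0 then show ?case by auto
next
  case (Suc m)
  show ?case
  proof (cases "i < 2^Suc m")
    case True
    from Suc[of i] obtain s where "length s = m" "Q m i = X s \<or> Q m i = Y s" by blast
    then show ?thesis using True by (auto intro!: exI[of _ "s @ [One]"])
  next
    case False
    from Suc[of "i - 2^Suc m"] obtain s where "length s = m" "Q m (i - 2^Suc m) = X s \<or> Q m (i - 2^Suc m) = Y s" by blast
    then show ?thesis using False by (auto intro!: exI[of _ "s @ [Two]"])
  qed
qed

lemma level_Q[simp]: "level (Q m i) = Suc m"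
  using Q_shape[of m i] by auto

lemma Q_not_T[simp]: "Q m i \<noteq> T"
  using Q_shape[of m i] by auto

lemma level_child: "U \<noteq> T \<Longrightarrow> level (child U d) = Suc (level U)"
  by (cases U) auto

lemma child_inj: "U \<noteq> T \<Longrightarrow> U' \<noteq> T \<Longrightarrow> child U d = child U' d' \<longleftrightarrow> U = U' \<and> d = d'"
  by (cases U; cases U') auto

lemma Q_inj: "i < 2^Suc m \<Longrightarrow> i' < 2^Suc m \<Longrightarrow> Q m i = Q m i' \<Longrightarrow> i = i'"
proof (induction m arbitrary: i i')
  case 0 then show ?case by (auto split: if_splits)
next
  case (Suc m)
  show ?case
  proof (cases "i < 2^Suc m"; cases "i' < 2^Suc m")
    assume a: "i < 2^Suc m" "i' < 2^Suc m"
    then show ?thesis using Suc by (auto simp: child_inj)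
  next
    assume a: "i < 2^Suc m" "\<not> i' < 2^Suc m"
    then show ?thesis using Suc.prems by (auto simp: child_inj)
  next
    assume a: "\<not> i < 2^Suc m" "i' < 2^Suc m"
    then show ?thesis using Suc.prems by (auto simp: child_inj)
  next
    assume a: "\<not> i < 2^Suc m" "\<not> i' < 2^Suc m"
    then have "i - 2^Suc m = i' - 2^Suc m"
      using Suc.prems by (intro Suc.IH) (auto simp: child_inj)
    then show ?thesis using a by simp
  qed
qed

lemma Q_first: "Q m 0 = X (replicate m One)"
  by (induction m) (auto simp: replicate_append_same)

lemma Q_last: "Q m (2^Suc m - 1) = Y (replicate m Two)"
proof (induction m)
  case 0 then show ?case by simp
next
  case (Suc m)
  have "\<not> (2::nat)^Suc (Suc m) - 1 < 2^Suc m" by simp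
  moreover have "(2::nat)^Suc (Suc m) - 1 - 2^Suc m = 2^Suc m - 1" by simp
  ultimately show ?case using Suc by (simp del: power_Suc add: replicate_append_same)
qed

lemma Q_lo: "i < 2^Suc m \<Longrightarrow> Q (Suc m) i = child (Q m i) One"
  by simp

lemma Q_hi: "Q (Suc m) (2^Suc m + i) = child (Q m i) Two"
  by (simp del: power_Suc)

lemma Q_mid1: "Q (Suc m) (2^Suc m - 1) = Y (replicate m Two @ [One])"
  using Q_last[of m] by (simp del: power_Suc)

lemma Q_mid2: "Q (Suc m) (2^Suc m) = X (replicate m One @ [Two])"
  using Q_hi[of m 0] Q_first[of m] by simp

declare Q.simps(2)[simp del]

definition invG :: "nat \<Rightarrow> sys \<Rightarrow> nat \<Rightarrow> bool" where
"invG m S j \<longleftrightarrow> j < 2^Suc m \<and>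
 (\<forall>U A B. SumEq U A B \<in> S \<longrightarrow> U \<noteq> T \<and> A = child U One \<and> B = child U Two) \<and>
 (\<forall>U V W. ProdEq U V W \<in> S \<longrightarrow> level U = Suc m \<longrightarrow> V = T \<and> (\<exists>i. Suc i < 2^Suc m \<and> U = Q m i \<and> W = Q m (Suc i))) \<and>
 (\<forall>i. Suc i < 2^Suc m \<longrightarrow> ProdEq (Q m i) T (Q m (Suc i)) \<in> S) \<and>
 (\<forall>U A B. SumEq U A B \<in> S \<longrightarrow> level U = Suc m \<longrightarrow> U = Q m j \<or> U = Q m (2^Suc m - 1)) \<and>
 (\<exists>A B. SumEq (Q m j) A B \<in> S)"

definition invH :: "nat \<Rightarrow> nat \<Rightarrow> sys \<Rightarrow> nat \<Rightarrow> bool" where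
"invH n m S j \<longleftrightarrow>
 (\<forall>U V W. ProdEq U V W \<in> S \<longrightarrow> level U = Suc (Suc m) \<longrightarrow> V = T \<and>
    ((\<exists>i<j. (U = Q (Suc m) i \<and> W = Q (Suc m) (Suc i)) \<or>
            (U = Q (Suc m) (2^Suc m + i) \<and> W = Q (Suc m) (Suc (2^Suc m + i))))
     \<or> (U = Q (Suc m) (2^Suc m - 1) \<and> W = Q (Suc m) (2^Suc m)))) \<and>
 (\<forall>i<j. ProdEq (Q (Suc m) i) T (Q (Suc m) (Suc i)) \<in> S \<and>
        ProdEq (Q (Suc m) (2^Suc m + i)) T (Q (Suc m) (Suc (2^Suc m + i))) \<in> S) \<and>
 (m \<le> n \<longrightarrow> ProdEq (Q (Suc m) (2^Suc m - 1)) T (Q (Suc m) (2^Suc m)) \<in> S) \<and>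
 (\<forall>U A B. SumEq U A B \<in> S \<longrightarrow> level U = Suc (Suc m) \<longrightarrow> U = Q (Suc m) 0 \<or> U = Q (Suc m) (2^Suc (Suc m) - 1)) \<and>
 (m \<le> n \<longrightarrow> (\<exists>A B. SumEq (Q (Suc m) 0) A B \<in> S))"

definition invK :: "nat \<Rightarrow> nat \<Rightarrow> sys \<Rightarrow> bool" where
"invK n m S \<longleftrightarrow>
 (\<forall>U V W. ProdEq U V W \<in> S \<longrightarrow> Suc (Suc (Suc m)) \<le> level U \<longrightarrow> V = T \<and>
     (\<exists>i\<le>n. U = Y (replicate i Two @ [One]) \<and> W = X (replicate i One @ [Two]))) \<and>
 (\<forall>i. Suc m \<le> i \<and> i \<le> n \<longrightarrow> ProdEq (Y (replicate i Two @ [One])) T (X (replicate i One @ [Two])) \<in> S) \<and>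
 (\<forall>U A B. SumEq U A B \<in> S \<longrightarrow> Suc (Suc (Suc m)) \<le> level U \<longrightarrow> (\<exists>i. U = X (replicate i One) \<or> U = Y (replicate i Two))) \<and>
 (\<forall>i. Suc (Suc m) \<le> i \<and> i \<le> Suc n \<longrightarrow> (\<exists>A B. SumEq (X (replicate i One)) A B \<in> S))"

definition Inv where "Inv n m S j \<longleftrightarrow> invG m S j \<and> invH n m S j \<and> invK n m S"

lemma init_G: "invG 0 (sigma n) 0"
  unfolding invG_def sigma_def by (auto simp: replicate_append_same)

lemma sig_x: "i \<le> Suc n \<Longrightarrow> SumEq (X (replicate i One)) (X (replicate (Suc i) One)) (X (replicate i One @ [Two])) \<in> sigma n"
proof (cases i)
  case 0 then show ?thesis unfolding sigma_def by force
next
  case (Suc x)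
  assume "i \<le> Suc n"
  then have "x \<in> {0..n}" using Suc by simp
  then show ?thesis unfolding sigma_def using Suc by blast
qed

lemma sig_p: "i \<le> n \<Longrightarrow> ProdEq (Y (replicate i Two @ [One])) T (X (replicate i One @ [Two])) \<in> sigma n"
  unfolding sigma_def by force

lemma init_H: "invH n 0 (sigma n) 0"
  unfolding invH_def
proof (intro conjI)
  show "0 \<le> n \<longrightarrow> (\<exists>A B. SumEq (Q (Suc 0) 0) A B \<in> sigma n)"
    using sig_x[of 1 n] by (auto simp: Q_first)
  show "0 \<le> n \<longrightarrow> ProdEq (Q (Suc 0) (2 ^ Suc 0 - 1)) T (Q (Suc 0) (2 ^ Suc 0)) \<in> sigma n"
    using sig_p[of 0 n] Q_mid1[of 0] Q_mid2[of 0] by simp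
qed (auto simp: sigma_def Q.simps)

lemma init_K: "invK n 0 (sigma n)"
  unfolding invK_def
proof (intro conjI)
  show "\<forall>i. Suc 0 \<le> i \<and> i \<le> n \<longrightarrow> ProdEq (Y (replicate i Two @ [One])) T (X (replicate i One @ [Two])) \<in> sigma n"
    using sig_p by blast
  show "\<forall>i. Suc (Suc 0) \<le> i \<and> i \<le> Suc n \<longrightarrow> (\<exists>A B. SumEq (X (replicate i One)) A B \<in> sigma n)"
    using sig_x by blast
  show "\<forall>U A B. SumEq U A B \<in> sigma n \<longrightarrow> Suc (Suc (Suc 0)) \<le> level U \<longrightarrow> (\<exists>i. U = X (replicate i One) \<or> U = Y (replicate i Two))"
    unfolding sigma_def by (auto simp del: replicate_Suc simp: replicate_Suc[symmetric])
qed (auto simp: sigma_def)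

lemma step_core:
  assumes G: "invG m S j" and st: "sum_transform S U S'" and lv: "level U = Suc m"
  shows "Suc j < 2^Suc m \<and> U = Q m j \<and>
    S' = (S - {SumEq U (child U One) (child U Two)}) \<union>
      {SumEq (Q m (Suc j)) (child (Q m (Suc j)) One) (child (Q m (Suc j)) Two),
       ProdEq (child U One) T (child (Q m (Suc j)) One), ProdEq (child U Two) T (child (Q m (Suc j)) Two)}"
proof -
  from st obtain U1 U2 W W1 W2 where
    s1: "SumEq U U1 U2 \<in> S" and p1: "ProdEq U T W \<in> S" and
    w: "SumEq W W1 W2 \<in> S \<or> ((\<forall>A B. SumEq W A B \<notin> S) \<and> W1 = child W One \<and> W2 = child W Two)" and
    S': "S' = (S - {SumEq U U1 U2}) \<union> {SumEq W W1 W2, ProdEq U1 T W1, ProdEq U2 T W2}"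
    unfolding sum_transform_def by blast
  have jl: "j < 2^Suc m" using G by (simp add: invG_def)
  from G p1 lv obtain i where i: "Suc i < 2^Suc m" "U = Q m i" "W = Q m (Suc i)"
    unfolding invG_def by blast
  from G s1 lv have "U = Q m j \<or> U = Q m (2^Suc m - 1)" unfolding invG_def by blast
  moreover have "U \<noteq> Q m (2^Suc m - 1)"
  proof
    assume "U = Q m (2^Suc m - 1)"
    then have "i = 2^Suc m - 1" using i Q_inj[of i m "2^Suc m - 1"] by simp
    then show False using i by simp
  qed
  ultimately have "U = Q m j" by blast
  then have ij: "i = j" using i jl Q_inj[of i m j] by simp
  have u12: "U1 = child U One" "U2 = child U Two" using G s1 unfolding invG_def by blast+
  have w12: "W1 = child W One" "W2 = child W Two" using G w unfolding invG_def by blast+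
  show ?thesis using S' u12 w12 i ij \<open>U = Q m j\<close> by simp
qed


lemma step_inv:
  assumes I: "Inv n m S j" and st: "sum_transform S U S'" and lv: "level U = Suc m"
  shows "Suc j < 2^Suc m \<and> Inv n m S' (Suc j)"
proof -
  have G: "invG m S j" and H: "invH n m S j" and K: "invK n m S" using I by (auto simp: Inv_def)
  note c = step_core[OF G st lv]
  have jl: "Suc j < 2^Suc m" and U: "U = Q m j" using c by auto
  define N where "N = (2::nat)^Suc m"
  have e1: "child (Q m j) One = Q (Suc m) j" using jl by (simp add: Q_lo)
  have e2: "child (Q m (Suc j)) One = Q (Suc m) (Suc j)" using jl by (simp add: Q_lo)
  have e3: "child (Q m j) Two = Q (Suc m) (N + j)" unfolding N_def by (simp only: Q_hi)
  have e4: "child (Q m (Suc j)) Two = Q (Suc m) (Suc (N + j))"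
    unfolding N_def using Q_hi[of m "Suc j"] by simp
  have S': "S' = (S - {SumEq (Q m j) (Q (Suc m) j) (Q (Suc m) (N + j))}) \<union>
      {SumEq (Q m (Suc j)) (Q (Suc m) (Suc j)) (Q (Suc m) (Suc (N + j))),
       ProdEq (Q (Suc m) j) T (Q (Suc m) (Suc j)), ProdEq (Q (Suc m) (N + j)) T (Q (Suc m) (Suc (N + j)))}"
    using c e1 e2 e3 e4 by simp
  have lvQ1: "level (Q (Suc m) i) \<noteq> Suc m" for i by simp
  have g1: "\<forall>U A B. SumEq U A B \<in> S \<longrightarrow> U \<noteq> T \<and> A = child U One \<and> B = child U Two"
   and g2: "\<forall>U V W. ProdEq U V W \<in> S \<longrightarrow> level U = Suc m \<longrightarrow> V = T \<and> (\<exists>i. Suc i < 2^Suc m \<and> U = Q m i \<and> W = Q m (Suc i))"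
   and g3: "\<forall>i. Suc i < 2^Suc m \<longrightarrow> ProdEq (Q m i) T (Q m (Suc i)) \<in> S"
   and g4: "\<forall>U A B. SumEq U A B \<in> S \<longrightarrow> level U = Suc m \<longrightarrow> U = Q m j \<or> U = Q m (2^Suc m - 1)"
    using G unfolding invG_def by blast+
  have G': "invG m S' (Suc j)"
    unfolding invG_def
  proof (intro conjI allI impI)
    show "Suc j < 2 ^ Suc m" by (rule jl)
  next
    fix U0 A B assume "SumEq U0 A B \<in> S'"
    then have "SumEq U0 A B \<in> S \<or> (U0 = Q m (Suc j) \<and> A = Q (Suc m) (Suc j) \<and> B = Q (Suc m) (Suc (N + j)))"
      unfolding S' by blast
    then have "U0 \<noteq> T \<and> A = child U0 One \<and> B = child U0 Two"
    proof
      assume "SumEq U0 A B \<in> S" then show ?thesis using g1 by blast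
    next
      assume "U0 = Q m (Suc j) \<and> A = Q (Suc m) (Suc j) \<and> B = Q (Suc m) (Suc (N + j))"
      then show ?thesis using e2 e4 by simp
    qed
    then show "U0 \<noteq> T" and "A = child U0 One" and "B = child U0 Two" by blast+
  next
    fix U0 V W assume a: "ProdEq U0 V W \<in> S'" "level U0 = Suc m"
    then have "ProdEq U0 V W \<in> S" unfolding S' using lvQ1 by auto
    then have "V = T \<and> (\<exists>i. Suc i < 2 ^ Suc m \<and> U0 = Q m i \<and> W = Q m (Suc i))"
      using g2 a(2) by blast
    then show "V = T" and "(\<exists>i. Suc i < 2 ^ Suc m \<and> U0 = Q m i \<and> W = Q m (Suc i))" by blast+
  next
    fix i :: nat assume "Suc i < 2 ^ Suc m"
    then show "ProdEq (Q m i) T (Q m (Suc i)) \<in> S'" using g3 unfolding S' by blast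
  next
    fix U0 A B assume a: "SumEq U0 A B \<in> S'" "level U0 = Suc m"
    then have "(SumEq U0 A B \<in> S \<and> SumEq U0 A B \<noteq> SumEq (Q m j) (Q (Suc m) j) (Q (Suc m) (N + j)))
        \<or> U0 = Q m (Suc j)"
      unfolding S' by blast
    then show "U0 = Q m (Suc j) \<or> U0 = Q m (2 ^ Suc m - 1)"
    proof
      assume b: "SumEq U0 A B \<in> S \<and> SumEq U0 A B \<noteq> SumEq (Q m j) (Q (Suc m) j) (Q (Suc m) (N + j))"
      then have "U0 = Q m j \<or> U0 = Q m (2 ^ Suc m - 1)" using g4 a(2) by blast
      moreover have "A = child U0 One \<and> B = child U0 Two" using g1 b by blast
      ultimately show ?thesis using b e1 e3 by auto
    qed simp
  next
    show "\<exists>A B. SumEq (Q m (Suc j)) A B \<in> S'" unfolding S' by blast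
  qed
  have keep: "x \<in> S'" if "x \<in> S" "x \<noteq> SumEq (Q m j) (Q (Suc m) j) (Q (Suc m) (N + j))" for x
    using that unfolding S' by blast
  have prodS': "ProdEq a b c \<in> S' \<longleftrightarrow> ProdEq a b c \<in> S \<or>
      (a = Q (Suc m) j \<and> b = T \<and> c = Q (Suc m) (Suc j)) \<or>
      (a = Q (Suc m) (N + j) \<and> b = T \<and> c = Q (Suc m) (Suc (N + j)))" for a b c
    unfolding S' by auto
  have sumS': "SumEq a b c \<in> S' \<Longrightarrow> SumEq a b c \<in> S \<or> a = Q m (Suc j)" for a b c
    unfolding S' by auto
  have H': "invH n m S' (Suc j)"
    unfolding invH_def
  proof (intro conjI allI impI)
    fix U0 V W assume a: "ProdEq U0 V W \<in> S'" "level U0 = Suc (Suc m)"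
    from a(1)[unfolded prodS'] have "V = T \<and>
       ((\<exists>i<Suc j. U0 = Q (Suc m) i \<and> W = Q (Suc m) (Suc i) \<or>
                   U0 = Q (Suc m) (2 ^ Suc m + i) \<and> W = Q (Suc m) (Suc (2 ^ Suc m + i))) \<or>
        U0 = Q (Suc m) (2 ^ Suc m - 1) \<and> W = Q (Suc m) (2 ^ Suc m))"
    proof (elim disjE)
      assume "ProdEq U0 V W \<in> S"
      then have "V = T \<and>
       ((\<exists>i<j. U0 = Q (Suc m) i \<and> W = Q (Suc m) (Suc i) \<or>
                   U0 = Q (Suc m) (2 ^ Suc m + i) \<and> W = Q (Suc m) (Suc (2 ^ Suc m + i))) \<or>
        U0 = Q (Suc m) (2 ^ Suc m - 1) \<and> W = Q (Suc m) (2 ^ Suc m))"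
        using H a(2) unfolding invH_def by blast
      then show ?thesis using less_SucI by blast
    qed (auto simp: N_def)
    then show "V = T" and "((\<exists>i<Suc j. U0 = Q (Suc m) i \<and> W = Q (Suc m) (Suc i) \<or> U0 = Q (Suc m) (2 ^ Suc m + i) \<and> W = Q (Suc m) (Suc (2 ^ Suc m + i))) \<or> U0 = Q (Suc m) (2 ^ Suc m - 1) \<and> W = Q (Suc m) (2 ^ Suc m))" by blast+
  next
    fix i assume "i < Suc j"
    then have "i < j \<or> i = j" by auto
    then have "ProdEq (Q (Suc m) i) T (Q (Suc m) (Suc i)) \<in> S' \<and>
        ProdEq (Q (Suc m) (2 ^ Suc m + i)) T (Q (Suc m) (Suc (2 ^ Suc m + i))) \<in> S'"
      using H unfolding invH_def prodS' N_def by blast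
    then show "ProdEq (Q (Suc m) i) T (Q (Suc m) (Suc i)) \<in> S'" and "ProdEq (Q (Suc m) (2 ^ Suc m + i)) T (Q (Suc m) (Suc (2 ^ Suc m + i))) \<in> S'" by blast+
  next
    assume "m \<le> n"
    then show "ProdEq (Q (Suc m) (2 ^ Suc m - 1)) T (Q (Suc m) (2 ^ Suc m)) \<in> S'"
      using H unfolding invH_def prodS' by blast
  next
    fix U0 A B assume a: "SumEq U0 A B \<in> S'" "level U0 = Suc (Suc m)"
    then have "SumEq U0 A B \<in> S" using sumS' by fastforce
    then show "U0 = Q (Suc m) 0 \<or> U0 = Q (Suc m) (2 ^ Suc (Suc m) - 1)"
      using H a(2) unfolding invH_def by blast
  next
    assume "m \<le> n"
    then obtain A B where "SumEq (Q (Suc m) 0) A B \<in> S" using H unfolding invH_def by blast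
    moreover have "Q (Suc m) 0 \<noteq> Q m j" by (metis level_Q n_not_Suc_n)
    ultimately have "SumEq (Q (Suc m) 0) A B \<in> S'" by (intro keep) auto
    then show "\<exists>A B. SumEq (Q (Suc m) 0) A B \<in> S'" by blast
  qed
  have K': "invK n m S'"
    unfolding invK_def
  proof (intro conjI allI impI)
    fix U0 V W assume a: "ProdEq U0 V W \<in> S'" "Suc (Suc (Suc m)) \<le> level U0"
    then have "ProdEq U0 V W \<in> S" unfolding prodS' by auto
    then have "V = T \<and> (\<exists>i\<le>n. U0 = Y (replicate i Two @ [One]) \<and> W = X (replicate i One @ [Two]))"
      using K a(2) unfolding invK_def by blast
    then show "V = T" and "(\<exists>i\<le>n. U0 = Y (replicate i Two @ [One]) \<and> W = X (replicate i One @ [Two]))" by blast+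
  next
    fix i assume "Suc m \<le> i \<and> i \<le> n"
    then show "ProdEq (Y (replicate i Two @ [One])) T (X (replicate i One @ [Two])) \<in> S'"
      using K unfolding invK_def prodS' by blast
  next
    fix U0 A B assume a: "SumEq U0 A B \<in> S'" "Suc (Suc (Suc m)) \<le> level U0"
    then have "SumEq U0 A B \<in> S" using sumS' by fastforce
    then show "\<exists>i. U0 = X (replicate i One) \<or> U0 = Y (replicate i Two)"
      using K a(2) unfolding invK_def by blast
  next
    fix i assume a: "Suc (Suc m) \<le> i \<and> i \<le> Suc n"
    then obtain A B where b: "SumEq (X (replicate i One)) A B \<in> S" using K unfolding invK_def by blast
    have "X (replicate i One) \<noteq> Q m j" using a level_Q[of m j] by (metis level.simps(2) length_replicate Suc_eq_plus1 Suc_n_not_le_n le_SucI)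
    then have "SumEq (X (replicate i One)) A B \<in> S'" using b by (intro keep) auto
    then show "\<exists>A B. SumEq (X (replicate i One)) A B \<in> S'" by blast
  qed
  show ?thesis using G' H' K' jl by (simp add: Inv_def)
qed


lemma peak_bound:
  assumes G: "invG m S j" and p: "peak S U" and lv: "level U = Suc m"
  shows "Suc j < 2^Suc m"
proof -
  from p obtain A B W where s1: "SumEq U A B \<in> S" and p1: "ProdEq U T W \<in> S"
    unfolding peak_def by blast
  have jl: "j < 2^Suc m" using G by (simp add: invG_def)
  from G p1 lv obtain i where i: "Suc i < 2^Suc m" "U = Q m i"
    unfolding invG_def by blast
  from G s1 lv have "U = Q m j \<or> U = Q m (2^Suc m - 1)" unfolding invG_def by blast
  then show ?thesis
  proof
    assume "U = Q m j"
    then have "i = j" using i jl Q_inj[of i m j] by simp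
    then show ?thesis using i by simp
  next
    assume "U = Q m (2^Suc m - 1)"
    then have "i = 2^Suc m - 1" using i Q_inj[of i m "2^Suc m - 1"] by simp
    then show ?thesis using i by simp
  qed
qed

lemma peak_exists:
  assumes G: "invG m S j" and jl: "Suc j < 2^Suc m"
  shows "peak S (Q m j)"
  using G jl unfolding invG_def peak_def by blast

lemma steps_inv:
  assumes "steps_at (Suc m) S t S'" and "Inv n m S 0"
  shows "Inv n m S' t"
  using assms
proof (induction rule: steps_at.induct)
  case refl then show ?case by simp
next
  case (step t S' U S'')
  then show ?case using step_inv by blast
qed

lemma phase_inv:
  assumes "complete_phase (Suc m) S t S'" and "Inv n m S 0"
  shows "t = 2^Suc m - 1 \<and> Inv n m S' t"
proof -
  have I: "Inv n m S' t" using assms steps_inv unfolding complete_phase_def by blast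
  then have tl: "t < 2^Suc m" by (simp add: Inv_def invG_def)
  have "\<not> Suc t < 2^Suc m"
  proof
    assume "Suc t < 2^Suc m"
    then have "peak S' (Q m t)" using I peak_exists by (auto simp: Inv_def)
    then show False using assms(1) unfolding complete_phase_def by force
  qed
  then show ?thesis using tl I by simp
qed

lemma trans_inv:
  assumes I: "Inv n m S (2^Suc m - 1)" and mn: "m \<le> n"
  shows "Inv n (Suc m) S 0"
proof -
  have G: "invG m S (2^Suc m - 1)" and H: "invH n m S (2^Suc m - 1)" and K: "invK n m S"
    using I by (auto simp: Inv_def)
  have k1: "\<forall>U V W. ProdEq U V W \<in> S \<longrightarrow> Suc (Suc (Suc m)) \<le> level U \<longrightarrow> V = T \<and>
     (\<exists>i\<le>n. U = Y (replicate i Two @ [One]) \<and> W = X (replicate i One @ [Two]))"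
   and k2: "\<forall>i. Suc m \<le> i \<and> i \<le> n \<longrightarrow> ProdEq (Y (replicate i Two @ [One])) T (X (replicate i One @ [Two])) \<in> S"
   and k3: "\<forall>U A B. SumEq U A B \<in> S \<longrightarrow> Suc (Suc (Suc m)) \<le> level U \<longrightarrow> (\<exists>i. U = X (replicate i One) \<or> U = Y (replicate i Two))"
   and k4: "\<forall>i. Suc (Suc m) \<le> i \<and> i \<le> Suc n \<longrightarrow> (\<exists>A B. SumEq (X (replicate i One)) A B \<in> S)"
    using K unfolding invK_def by blast+
  define N where "N = (2::nat)^Suc m"
  have N2: "(2::nat)^Suc (Suc m) = N + N" unfolding N_def by simp
  have Npos: "1 \<le> N" unfolding N_def by simp
  have G': "invG (Suc m) S 0"
    unfolding invG_def
  proof (intro conjI allI impI)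
    show "0 < (2::nat) ^ Suc (Suc m)" by simp
  next
    fix U0 A B assume "SumEq U0 A B \<in> S"
    then have "U0 \<noteq> T \<and> A = child U0 One \<and> B = child U0 Two" using G unfolding invG_def by blast
    then show "U0 \<noteq> T" and "A = child U0 One" and "B = child U0 Two" by blast+
  next
    fix U0 V W assume a: "ProdEq U0 V W \<in> S" "level U0 = Suc (Suc m)"
    then have "V = T \<and>
       ((\<exists>i<2^Suc m - 1. U0 = Q (Suc m) i \<and> W = Q (Suc m) (Suc i) \<or>
                   U0 = Q (Suc m) (2 ^ Suc m + i) \<and> W = Q (Suc m) (Suc (2 ^ Suc m + i))) \<or>
        U0 = Q (Suc m) (2 ^ Suc m - 1) \<and> W = Q (Suc m) (2 ^ Suc m))"
      using H unfolding invH_def by blast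
    then have vt: "V = T" and
      d: "(\<exists>i<N - 1. U0 = Q (Suc m) i \<and> W = Q (Suc m) (Suc i) \<or>
                   U0 = Q (Suc m) (N + i) \<and> W = Q (Suc m) (Suc (N + i))) \<or>
        U0 = Q (Suc m) (N - 1) \<and> W = Q (Suc m) N" unfolding N_def by blast+
    from d have "\<exists>i. Suc i < 2 ^ Suc (Suc m) \<and> U0 = Q (Suc m) i \<and> W = Q (Suc m) (Suc i)"
    proof (elim disjE exE)
      fix i assume h: "i < N - 1 \<and> (U0 = Q (Suc m) i \<and> W = Q (Suc m) (Suc i) \<or>
                   U0 = Q (Suc m) (N + i) \<and> W = Q (Suc m) (Suc (N + i)))"
      have il: "i < N - 1" using h by blast
      from h have "(U0 = Q (Suc m) i \<and> W = Q (Suc m) (Suc i)) \<or>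
                   (U0 = Q (Suc m) (N + i) \<and> W = Q (Suc m) (Suc (N + i)))" by blast
      then show ?thesis
      proof
        assume "U0 = Q (Suc m) i \<and> W = Q (Suc m) (Suc i)"
        then show ?thesis using il unfolding N2 by (intro exI[of _ i]) auto
      next
        assume "U0 = Q (Suc m) (N + i) \<and> W = Q (Suc m) (Suc (N + i))"
        then show ?thesis using il unfolding N2 by (intro exI[of _ "N + i"]) auto
      qed
    next
      assume "U0 = Q (Suc m) (N - 1) \<and> W = Q (Suc m) N"
      then show ?thesis unfolding N2 using Npos by (intro exI[of _ "N - 1"]) auto
    qed
    with vt have "V = T \<and> (\<exists>i. Suc i < 2 ^ Suc (Suc m) \<and> U0 = Q (Suc m) i \<and> W = Q (Suc m) (Suc i))" by blast
    then show "V = T" and "(\<exists>i. Suc i < 2 ^ Suc (Suc m) \<and> U0 = Q (Suc m) i \<and> W = Q (Suc m) (Suc i))" by blast+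
  next
    fix i assume a: "Suc i < 2 ^ Suc (Suc m)"
    have h2: "\<forall>i<N - 1. ProdEq (Q (Suc m) i) T (Q (Suc m) (Suc i)) \<in> S \<and>
        ProdEq (Q (Suc m) (N + i)) T (Q (Suc m) (Suc (N + i))) \<in> S"
      using H unfolding invH_def N_def by blast
    have h3: "ProdEq (Q (Suc m) (N - 1)) T (Q (Suc m) N) \<in> S"
      using H mn unfolding invH_def N_def by blast
    consider "i < N - 1" | "i = N - 1" | "N \<le> i" by linarith
    then show "ProdEq (Q (Suc m) i) T (Q (Suc m) (Suc i)) \<in> S"
    proof cases
      case 1 then show ?thesis using h2 by blast
    next
      case 2 then show ?thesis using h3 Npos by simp
    next
      case 3
      then obtain k where k: "i = N + k" using le_Suc_ex by blast
      then have "k < N - 1" using a unfolding N2 by simp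
      then show ?thesis using h2 k by blast
    qed
  next
    fix U0 A B assume "SumEq U0 A B \<in> S" "level U0 = Suc (Suc m)"
    then show "U0 = Q (Suc m) 0 \<or> U0 = Q (Suc m) (2 ^ Suc (Suc m) - 1)"
      using H unfolding invH_def by blast
  next
    show "\<exists>A B. SumEq (Q (Suc m) 0) A B \<in> S" using H mn unfolding invH_def by blast
  qed
  have H': "invH n (Suc m) S 0"
    unfolding invH_def
  proof (intro conjI allI impI)
    fix U0 V W assume a: "ProdEq U0 V W \<in> S" "level U0 = Suc (Suc (Suc m))"
    then obtain i where i: "V = T" "U0 = Y (replicate i Two @ [One])" "W = X (replicate i One @ [Two])"
      using k1 by fastforce
    then have "i = Suc m" using a(2) by simp
    then have "V = T \<and>
       ((\<exists>i<0. U0 = Q (Suc (Suc m)) i \<and> W = Q (Suc (Suc m)) (Suc i) \<or>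
               U0 = Q (Suc (Suc m)) (2 ^ Suc (Suc m) + i) \<and>
               W = Q (Suc (Suc m)) (Suc (2 ^ Suc (Suc m) + i))) \<or>
        U0 = Q (Suc (Suc m)) (2 ^ Suc (Suc m) - 1) \<and> W = Q (Suc (Suc m)) (2 ^ Suc (Suc m)))"
      using i Q_mid1[of "Suc m"] Q_mid2[of "Suc m"] by simp
    then show "V = T" and "((\<exists>i<0. U0 = Q (Suc (Suc m)) i \<and> W = Q (Suc (Suc m)) (Suc i) \<or> U0 = Q (Suc (Suc m)) (2 ^ Suc (Suc m) + i) \<and> W = Q (Suc (Suc m)) (Suc (2 ^ Suc (Suc m) + i))) \<or> U0 = Q (Suc (Suc m)) (2 ^ Suc (Suc m) - 1) \<and> W = Q (Suc (Suc m)) (2 ^ Suc (Suc m)))" by blast+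
  next
    fix i :: nat assume "i < 0" then have "ProdEq (Q (Suc (Suc m)) i) T (Q (Suc (Suc m)) (Suc i)) \<in> S \<and>
         ProdEq (Q (Suc (Suc m)) (2 ^ Suc (Suc m) + i)) T (Q (Suc (Suc m)) (Suc (2 ^ Suc (Suc m) + i))) \<in> S"
      by simp
    then show "ProdEq (Q (Suc (Suc m)) i) T (Q (Suc (Suc m)) (Suc i)) \<in> S" and "ProdEq (Q (Suc (Suc m)) (2 ^ Suc (Suc m) + i)) T (Q (Suc (Suc m)) (Suc (2 ^ Suc (Suc m) + i))) \<in> S" by blast+
  next
    assume "Suc m \<le> n"
    then show "ProdEq (Q (Suc (Suc m)) (2 ^ Suc (Suc m) - 1)) T (Q (Suc (Suc m)) (2 ^ Suc (Suc m))) \<in> S"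
    proof -
      have "ProdEq (Y (replicate (Suc m) Two @ [One])) T (X (replicate (Suc m) One @ [Two])) \<in> S"
        using K \<open>Suc m \<le> n\<close> unfolding invK_def by blast
      then show ?thesis by (simp only: Q_mid1 Q_mid2)
    qed
  next
    fix U0 A B assume a: "SumEq U0 A B \<in> S" "level U0 = Suc (Suc (Suc m))"
    have "Suc (Suc (Suc m)) \<le> level U0" using a(2) by simp
    then obtain i where "U0 = X (replicate i One) \<or> U0 = Y (replicate i Two)"
      using k3 a(1) by blast
    then show "U0 = Q (Suc (Suc m)) 0 \<or> U0 = Q (Suc (Suc m)) (2 ^ Suc (Suc (Suc m)) - 1)"
    proof
      assume u: "U0 = X (replicate i One)"
      then have "i = Suc (Suc m)" using a(2) by simp
      then show ?thesis using u Q_first[of "Suc (Suc m)"] by simp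
    next
      assume u: "U0 = Y (replicate i Two)"
      then have "i = Suc (Suc m)" using a(2) by simp
      then show ?thesis using u Q_last[of "Suc (Suc m)"] by simp
    qed
  next
    assume "Suc m \<le> n"
    then have "Suc (Suc m) \<le> Suc (Suc m) \<and> Suc (Suc m) \<le> Suc n" by simp
    then have "\<exists>A B. SumEq (X (replicate (Suc (Suc m)) One)) A B \<in> S"
      using k4 by blast
    then show "\<exists>A B. SumEq (Q (Suc (Suc m)) 0) A B \<in> S"
      by (simp only: Q_first)
  qed
  have lvw: "Suc (Suc (Suc (Suc m))) \<le> x \<Longrightarrow> Suc (Suc (Suc m)) \<le> x" for x :: nat by simp
  have K': "invK n (Suc m) S"
    unfolding invK_def
  proof (intro conjI)
    show "\<forall>U V W. ProdEq U V W \<in> S \<longrightarrow> Suc (Suc (Suc (Suc m))) \<le> level U \<longrightarrow> V = T \<and>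
     (\<exists>i\<le>n. U = Y (replicate i Two @ [One]) \<and> W = X (replicate i One @ [Two]))"
      using k1 lvw by blast
    show "\<forall>i. Suc (Suc m) \<le> i \<and> i \<le> n \<longrightarrow> ProdEq (Y (replicate i Two @ [One])) T (X (replicate i One @ [Two])) \<in> S"
      using k2 by simp
    show "\<forall>U A B. SumEq U A B \<in> S \<longrightarrow> Suc (Suc (Suc (Suc m))) \<le> level U \<longrightarrow> (\<exists>i. U = X (replicate i One) \<or> U = Y (replicate i Two))"
      using k3 lvw by blast
    show "\<forall>i. Suc (Suc (Suc m)) \<le> i \<and> i \<le> Suc n \<longrightarrow> (\<exists>A B. SumEq (X (replicate i One)) A B \<in> S)"
      using k4 by simp
  qed
  show ?thesis using G' H' K' by (simp add: Inv_def)
qed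

theorem lemma6:
  fixes n k :: nat and Ss :: "nat \<Rightarrow> sys" and c :: "nat \<Rightarrow> nat"
  assumes "Ss 0 = sigma n"
    and "\<forall>j. 1 \<le> j \<and> j < k \<longrightarrow> complete_phase j (Ss (j - 1)) (c j) (Ss j)"
    and "1 \<le> k" and "k < n + 3"
  shows "(\<forall>m S'. steps_at k (Ss (k - 1)) m S' \<longrightarrow> m \<le> 2 ^ k - 1)
       \<and> (\<forall>m S'. complete_phase k (Ss (k - 1)) m S' \<longrightarrow> m = 2 ^ k - 1)"
proof -
  have chain: "j < k \<Longrightarrow> Inv n j (Ss j) 0" for j
  proof (induction j)
    case 0 then show ?case using assms(1) init_G init_H init_K by (simp add: Inv_def)
  next
    case (Suc j)
    then have IH: "Inv n j (Ss j) 0" by simp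
    have "complete_phase (Suc j) (Ss j) (c (Suc j)) (Ss (Suc j))"
      using assms(2) Suc.prems by fastforce
    then have "c (Suc j) = 2^Suc j - 1 \<and> Inv n j (Ss (Suc j)) (c (Suc j))"
      using phase_inv IH by blast
    moreover have "j \<le> n" using Suc.prems assms(4) by simp
    ultimately show ?case using trans_inv by auto
  qed
  obtain m0 where k: "k = Suc m0" using assms(3) by (cases k) auto
  have I: "Inv n m0 (Ss m0) 0" using chain[of m0] k by simp
  show ?thesis
  proof (intro conjI allI impI)
    fix t S' assume "steps_at k (Ss (k - 1)) t S'"
    then have "Inv n m0 S' t" using steps_inv I k by simp
    then have "t < 2 ^ k" using k by (simp add: Inv_def invG_def)
    then show "t \<le> 2 ^ k - 1" by simp
  next
    fix t S' assume "complete_phase k (Ss (k - 1)) t S'"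
    then show "t = 2 ^ k - 1" using phase_inv I k by simp
  qed
qed

end
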